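(* Let $\mathbb N$ be a 2-connected symmetric directed graph on $m\ge2$ vertices without self-arcs, and suppose the matrices satisfy $C_{ij}=C_{ji}$ for every pair of arcs $(i,j),(j,i)$; write $\mathcal K_{\{i,j\}}=\ker C_{ij}=\ker C_{ji}$. Let $\mathrm D$ be a symmetric ear decomposition of $\mathbb N$. If for every symmetric ear $\mathbb E\in\mathrm D$ the family $\{\mathcal K_{\{i,j\}}:\{i,j\}\text{ a two-length cycle of }\mathbb E\}$ (indexed by the two-length cycles of $\mathbb E$) is independent, then $\bar{\mathbb N}$ is well-configured. Moreover, if $\max_{\mathbb E\in\mathrm D} l(\mathbb E)\le n$, then there exist matrices with $C_{ij}=C_{ji}$ and $\ker C_{ij}\neq 0$ for all arcs such that $\bar{\mathbb N}$ is well-configured.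
   Context: A directed graph is symmetric if whenever $(i,j)$ is an arc so is $(j,i)$; a two-length cycle is such a pair of arcs $\{(i,j),(j,i)\}$. A symmetric directed graph is $k$-connected if after removing any $k-1$ two-length cycles (both arcs of each) the resulting graph is still strongly connected. Setup: $m$ agents with states $x_i\in\mathbb R^n$; each arc $(j,i)$ carries a real matrix $C_{ji}$ with $n$ columns; $\bar{\mathbb N}$ is well-configured if for all $x_1,\dots,x_m\in\mathbb R^n$, $C_{ji}x_i=C_{ji}x_j$ for every arc $(j,i)$ implies $x_1=\cdots=x_m$. A finite indexed family of subspaces $\{\mathcal S_1,\dots,\mathcal S_p\}$ is independent if $\mathcal S_i\cap\sum_{j\ne i}\mathcal S_j=0$ for every $i$. A symmetric directed path has distinct vertices $v_0,\dots,v_k$ ($k\ge1$) and exactly the arcs $(v_{r-1},v_r),(v_r,v_{r-1})$, $r=1,\dots,k$; its end-vertices are $v_0,v_k$. A symmetric directed cycle has distinct vertices $v_1,\dots,v_k$ ($k\ge3$) and exactly the arcs $(v_r,v_{r+1}),(v_{r+1},v_r)$ for $r=1,\dots,k$ (indices mod $k$). A symmetric ear decomposition of a symmetric directed graph $\mathbb G$ is a sequence $\mathbb E_0,\dots,\mathbb E_p$ of subgraphs where $\mathbb E_0$ is a symmetric directed cycle, each $\mathbb E_i$ ($i\ge1$) is a symmetric directed path or symmetric directed cycle, the $\mathbb E_i$ are pairwise arc-disjoint with union $\mathbb G$, and for $i\ge1$: a symmetric cycle $\mathbb E_i$ has exactly one vertex in common with $\bigcup_{k<i}\mathbb E_k$,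 and a symmetric path $\mathbb E_i$ has its two end-vertices as the only vertices in common with $\bigcup_{k<i}\mathbb E_k$. The length $l(\mathbb E)$ of a symmetric ear is its number of two-length cycles. *)

theory Defs
  imports "Jordan_Normal_Form.Matrix_Kernel"
begin

definition sym_digraph :: "'v set \<Rightarrow> ('v \<times> 'v) set \<Rightarrow> bool" where
  "sym_digraph V A \<longleftrightarrow> finite V \<and> A \<subseteq> V \<times> V \<and> sym A"

definition no_self_arcs :: "('v \<times> 'v) set \<Rightarrow> bool" where
  "no_self_arcs A \<longleftrightarrow> (\<forall>i. (i, i) \<notin> A)"

definition strongly_connected :: "'v set \<Rightarrow> ('v \<times> 'v) set \<Rightarrow> bool" where
  "strongly_connected V A \<longleftrightarrow> (\<forall>i\<in>V. \<forall>j\<in>V. (i, j) \<in> A\<^sup>*)"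

(* two-length cycles {(i,j),(j,i)} of an arc set, represented as the unordered pair {i,j} *)
definition two_cycles :: "('v \<times> 'v) set \<Rightarrow> 'v set set" where
  "two_cycles A = {{i, j} | i j. (i, j) \<in> A}"

definition remove_two_cycles :: "('v \<times> 'v) set \<Rightarrow> 'v set set \<Rightarrow> ('v \<times> 'v) set" where
  "remove_two_cycles A R = {(i, j). (i, j) \<in> A \<and> {i, j} \<notin> R}"

definition k_connected :: "nat \<Rightarrow> 'v set \<Rightarrow> ('v \<times> 'v) set \<Rightarrow> bool" where
  "k_connected k V A \<longleftrightarrow>
     (\<forall>R. R \<subseteq> two_cycles A \<and> card R \<le> k - 1 \<longrightarrow> strongly_connected V (remove_two_cycles A R))"

definition path_arcs :: "'v list \<Rightarrow> ('v \<times> 'v) set" where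
  "path_arcs vs = {(vs ! r, vs ! Suc r) | r. Suc r < length vs}
                \<union> {(vs ! Suc r, vs ! r) | r. Suc r < length vs}"

definition cycle_arcs :: "'v list \<Rightarrow> ('v \<times> 'v) set" where
  "cycle_arcs vs = {(vs ! r, vs ! (Suc r mod length vs)) | r. r < length vs}
                 \<union> {(vs ! (Suc r mod length vs), vs ! r) | r. r < length vs}"

definition is_sym_path :: "'v set \<times> ('v \<times> 'v) set \<Rightarrow> 'v list \<Rightarrow> bool" where
  "is_sym_path E vs \<longleftrightarrow> distinct vs \<and> length vs \<ge> 2 \<and> fst E = set vs \<and> snd E = path_arcs vs"

definition is_sym_cycle :: "'v set \<times> ('v \<times> 'v) set \<Rightarrow> 'v list \<Rightarrow> bool" where
  "is_sym_cycle E vs \<longleftrightarrow> distinct vs \<and> length vs \<ge> 3 \<and> fst E = set vs \<and> snd E = cycle_arcs vs"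

definition sym_ear_decomposition ::
  "'v set \<Rightarrow> ('v \<times> 'v) set \<Rightarrow> ('v set \<times> ('v \<times> 'v) set) list \<Rightarrow> bool" where
  "sym_ear_decomposition V A D \<longleftrightarrow>
     D \<noteq> [] \<and>
     (\<exists>vs. is_sym_cycle (D ! 0) vs) \<and>
     (\<forall>i < length D. 0 < i \<longrightarrow>
        (let prev = (\<Union>k<i. fst (D ! k)) in
          (\<exists>vs. is_sym_cycle (D ! i) vs \<and> card (fst (D ! i) \<inter> prev) = 1) \<or>
          (\<exists>vs. is_sym_path (D ! i) vs \<and> fst (D ! i) \<inter> prev = {hd vs, last vs}))) \<and>
     (\<forall>i < length D. \<forall>j < length D. i \<noteq> j \<longrightarrow> snd (D ! i) \<inter> snd (D ! j) = {}) \<and>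
     (\<Union>E\<in>set D. fst E) = V \<and>
     (\<Union>E\<in>set D. snd E) = A"

definition ear_length :: "'v set \<times> ('v \<times> 'v) set \<Rightarrow> nat" where
  "ear_length E = card (two_cycles (snd E))"

(* well-configured: C j i is the matrix carried by arc (j,i); states are vectors in R^n *)
definition well_configured :: "'v set \<Rightarrow> ('v \<times> 'v) set \<Rightarrow> nat \<Rightarrow> ('v \<Rightarrow> 'v \<Rightarrow> real mat) \<Rightarrow> bool" where
  "well_configured V A n C \<longleftrightarrow>
     (\<forall>x :: 'v \<Rightarrow> real vec. (\<forall>i\<in>V. x i \<in> carrier_vec n) \<longrightarrow>
        (\<forall>(j, i)\<in>A. C j i *\<^sub>v x i = C j i *\<^sub>v x j) \<longrightarrow>
        (\<forall>i\<in>V. \<forall>j\<in>V. x i = x j))"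

definition subspace_sum :: "nat \<Rightarrow> 'i set \<Rightarrow> ('i \<Rightarrow> real vec set) \<Rightarrow> real vec set" where
  "subspace_sum n I S = {finsum_vec TYPE(real) n f I | f. \<forall>j\<in>I. f j \<in> S j}"

definition independent_subspaces :: "nat \<Rightarrow> 'i set \<Rightarrow> ('i \<Rightarrow> real vec set) \<Rightarrow> bool" where
  "independent_subspaces n I S \<longleftrightarrow> (\<forall>i\<in>I. S i \<inter> subspace_sum n (I - {i}) S = {0\<^sub>v n})"

(* K_{i,j} = ker C_ij (= ker C_ji under the symmetry hypothesis), indexed by the two-length cycle {i,j} *)
definition cycle_kernel :: "('v \<Rightarrow> 'v \<Rightarrow> real mat) \<Rightarrow> 'v set \<Rightarrow> real vec set" where
  "cycle_kernel C e = (\<Inter>{mat_kernel (C i j) | i j. e = {i, j}})"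

end

theory Submission
  imports Defs
begin


lemma indep_zero:
  assumes ind: "independent_subspaces n I S" and fin: "finite I"
    and cl: "\<forall>j\<in>I. \<forall>v\<in>S j. v \<in> carrier_vec n \<and> -v \<in> S j"
    and fS: "\<forall>j\<in>I. f j \<in> S j"
    and sum0: "finsum_vec TYPE(real) n f I = 0\<^sub>v n" and i: "i \<in> I"
  shows "f i = 0\<^sub>v n"
proof -
  define g where "g j = - f j" for j
  define w where "w = finsum_vec TYPE(real) n g (I - {i})"
  have fc: "f \<in> I \<rightarrow> carrier_vec n" using cl fS by auto
  have gc: "g \<in> I - {i} \<rightarrow> carrier_vec n" using cl fS unfolding g_def by auto
  have wS: "w \<in> subspace_sum n (I - {i}) S"
    unfolding subspace_sum_def w_def using cl fS unfolding g_def by auto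
  have wc: "w \<in> carrier_vec n" unfolding w_def using finsum_vec_closed[OF gc] .
  have fic: "f i \<in> carrier_vec n" using fc i by auto
  have "f i = w"
  proof (rule eq_vecI)
    fix a assume "a < dim_vec w"
    hence a: "a < n" using wc by auto
    have "0 = finsum_vec TYPE(real) n f I $ a" using sum0 a by simp
    also have "\<dots> = (\<Sum>j\<in>I. f j $ a)" by (rule index_finsum_vec[OF fin a fc])
    also have "\<dots> = f i $ a + (\<Sum>j\<in>I - {i}. f j $ a)"
      using fin i by (simp add: sum.remove)
    finally have e: "f i $ a = - (\<Sum>j\<in>I - {i}. f j $ a)" by linarith
    have "w $ a = (\<Sum>j\<in>I - {i}. g j $ a)" unfolding w_def
      by (rule index_finsum_vec[OF _ a gc]) (use fin in auto)
    also have "\<dots> = (\<Sum>j\<in>I - {i}. - (f j $ a))"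
      by (rule sum.cong, simp, unfold g_def, rule index_uminus_vec, use fc a in force)
    finally show "f i $ a = w $ a" using e by (simp add: sum_negf)
  qed (use wc fic in auto)
  hence "f i \<in> S i \<inter> subspace_sum n (I - {i}) S" using wS fS i by auto
  thus ?thesis using ind i unfolding independent_subspaces_def by auto
qed



lemma kern_eq:
  assumes ab: "(a, b) \<in> A" and Csym: "\<forall>(i, j)\<in>A. C i j = C j i"
  shows "cycle_kernel C {a, b} = mat_kernel (C a b)"
proof -
  have "{mat_kernel (C i j) | i j. {a, b} = {i, j}} = {mat_kernel (C a b)}"
  proof -
    have "C b a = C a b" using Csym ab by auto
    thus ?thesis by (auto simp: doubleton_eq_iff)
  qed
  thus ?thesis unfolding cycle_kernel_def by simp
qed

lemma kern_props:
  assumes "dim_col M = n"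
  shows "v \<in> mat_kernel M \<Longrightarrow> v \<in> carrier_vec n \<and> -v \<in> mat_kernel M"
proof -
  assume v: "v \<in> mat_kernel M"
  have M: "M \<in> carrier_mat (dim_row M) n" using assms by auto
  have "(-1) \<cdot>\<^sub>v v \<in> mat_kernel M" by (rule mat_kernel_smult[OF M v])
  moreover have "(-1) \<cdot>\<^sub>v v = -v" by (intro eq_vecI) auto
  ultimately show ?thesis using v assms unfolding mat_kernel_def by auto
qed

lemma diff_in_kernel:
  assumes "dim_col M = n" "u \<in> carrier_vec n" "w \<in> carrier_vec n"
    and "M *\<^sub>v u = M *\<^sub>v w"
  shows "u - w \<in> mat_kernel M"
proof -
  have M: "M \<in> carrier_mat (dim_row M) n" using assms by auto
  have "M *\<^sub>v (u - w) = M *\<^sub>v u - M *\<^sub>v w"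
    by (rule mult_minus_distrib_mat_vec[OF M]) (use assms in auto)
  also have "\<dots> = 0\<^sub>v (dim_row M)" using assms(4) by (intro eq_vecI) auto
  finally show ?thesis unfolding mat_kernel_def using assms by auto
qed

lemma two_cycles_path:
  "two_cycles (path_arcs ws) = (\<lambda>r. {ws ! r, ws ! Suc r}) ` {..<length ws - 1}"
proof -
  have "two_cycles (path_arcs ws) \<subseteq> (\<lambda>r. {ws ! r, ws ! Suc r}) ` {..<length ws - 1}"
  proof
    fix e assume "e \<in> two_cycles (path_arcs ws)"
    then obtain i j where e: "e = {i, j}" and ij: "(i, j) \<in> path_arcs ws" unfolding two_cycles_def by auto
    from ij obtain r where r: "Suc r < length ws" and "(i, j) = (ws ! r, ws ! Suc r) \<or> (i, j) = (ws ! Suc r, ws ! r)"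
      unfolding path_arcs_def by blast
    hence "e = {ws ! r, ws ! Suc r}" using e by (auto simp: insert_commute)
    moreover have "r \<in> {..<length ws - 1}" using r by auto
    ultimately show "e \<in> (\<lambda>r. {ws ! r, ws ! Suc r}) ` {..<length ws - 1}" by blast
  qed
  moreover have "(\<lambda>r. {ws ! r, ws ! Suc r}) ` {..<length ws - 1} \<subseteq> two_cycles (path_arcs ws)"
  proof
    fix e assume "e \<in> (\<lambda>r. {ws ! r, ws ! Suc r}) ` {..<length ws - 1}"
    then obtain r where r: "r < length ws - 1" and e: "e = {ws ! r, ws ! Suc r}" by auto
    have "(ws ! r, ws ! Suc r) \<in> path_arcs ws" unfolding path_arcs_def using r by auto
    thus "e \<in> two_cycles (path_arcs ws)" unfolding two_cycles_def e by blast
  qed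
  ultimately show ?thesis by blast
qed



lemma walk_lemma:
  fixes ws :: "'v list" and x :: "'v \<Rightarrow> real vec"
  assumes len: "length ws \<ge> 2"
    and inj: "inj_on (\<lambda>r. {ws ! r, ws ! Suc r}) {..<length ws - 1}"
    and arcs: "path_arcs ws \<subseteq> A"
    and cols: "\<forall>(j, i)\<in>A. dim_col (C j i) = n"
    and Csym: "\<forall>(i, j)\<in>A. C i j = C j i"
    and xcar: "\<forall>v\<in>set ws. x v \<in> carrier_vec n"
    and cond: "\<forall>(j, i)\<in>A. C j i *\<^sub>v x i = C j i *\<^sub>v x j"
    and ends: "x (hd ws) = x (last ws)"
    and indep: "independent_subspaces n (two_cycles (path_arcs ws)) (cycle_kernel C)"
  shows "\<forall>v\<in>set ws. x v = x (hd ws)"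
proof -
  define m where "m = length ws - 1"
  define g where "g r = {ws ! r, ws ! Suc r}" for r
  define d where "d r = x (ws ! Suc r) - x (ws ! r)" for r
  define I where "I = two_cycles (path_arcs ws)"
  have I: "I = g ` {..<m}" unfolding I_def g_def m_def by (rule two_cycles_path)
  have injg: "inj_on g {..<m}" using inj unfolding g_def m_def .
  have arc: "(ws ! r, ws ! Suc r) \<in> A" if "r < m" for r
  proof -
    have "(ws ! r, ws ! Suc r) \<in> path_arcs ws" unfolding path_arcs_def using that m_def by auto
    thus ?thesis using arcs by auto
  qed
  have xc: "x (ws ! r) \<in> carrier_vec n" if "r \<le> m" for r
    using xcar that len unfolding m_def by auto
  have dc: "d r \<in> carrier_vec n" if "r < m" for r
    unfolding d_def using xc[of r] xc[of "Suc r"] that by auto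
  have kern: "cycle_kernel C (g r) = mat_kernel (C (ws ! r) (ws ! Suc r))" if "r < m" for r
    unfolding g_def by (rule kern_eq[OF arc[OF that] Csym])
  have dk: "d r \<in> cycle_kernel C (g r)" if r: "r < m" for r
  proof -
    have "C (ws ! r) (ws ! Suc r) *\<^sub>v x (ws ! Suc r) = C (ws ! r) (ws ! Suc r) *\<^sub>v x (ws ! r)"
      using cond arc[OF r] by auto
    moreover have "dim_col (C (ws ! r) (ws ! Suc r)) = n" using cols arc[OF r] by auto
    ultimately show ?thesis unfolding kern[OF r] d_def
      by (intro diff_in_kernel) (use xc r in auto)
  qed
  define f where "f e = d (the_inv_into {..<m} g e)" for e
  have fg: "f (g r) = d r" if "r < m" for r
    unfolding f_def using the_inv_into_f_f[OF injg] that by auto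
  have Sprops: "\<forall>j\<in>I. \<forall>v\<in>cycle_kernel C j. v \<in> carrier_vec n \<and> -v \<in> cycle_kernel C j"
  proof (intro ballI)
    fix j v assume j: "j \<in> I" and v: "v \<in> cycle_kernel C j"
    from j obtain r where r: "r < m" and jr: "j = g r" using I by auto
    have "dim_col (C (ws ! r) (ws ! Suc r)) = n" using cols arc[OF r] by auto
    thus "v \<in> carrier_vec n \<and> -v \<in> cycle_kernel C j"
      using kern_props v unfolding jr kern[OF r] by blast
  qed
  have fS: "\<forall>j\<in>I. f j \<in> cycle_kernel C j" using I fg dk by auto
  have finI: "finite I" using I by auto
  have fc: "f \<in> I \<rightarrow> carrier_vec n" using I fg dc by auto
  have sum0: "finsum_vec TYPE(real) n f I = 0\<^sub>v n"
  proof (rule eq_vecI)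
    show "dim_vec (finsum_vec TYPE(real) n f I) = dim_vec (0\<^sub>v n)"
      using finsum_vec_closed[OF fc] by auto
    fix a assume "a < dim_vec (0\<^sub>v n)"
    hence a: "a < n" by auto
    have "finsum_vec TYPE(real) n f I $ a = (\<Sum>e\<in>I. f e $ a)"
      by (rule index_finsum_vec[OF finI a fc])
    also have "\<dots> = (\<Sum>r<m. f (g r) $ a)" unfolding I by (rule sum.reindex[OF injg, unfolded comp_def])
    also have "\<dots> = (\<Sum>r<m. x (ws ! Suc r) $ a - x (ws ! r) $ a)"
    proof (rule sum.cong)
      fix r assume "r \<in> {..<m}"
      hence r: "r < m" by auto
      show "f (g r) $ a = x (ws ! Suc r) $ a - x (ws ! r) $ a"
        unfolding fg[OF r] d_def using xc[of r] xc[of "Suc r"] r a by auto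
    qed simp
    also have "\<dots> = x (ws ! m) $ a - x (ws ! 0) $ a" by (rule sum_lessThan_telescope)
    also have "ws ! m = last ws" unfolding m_def using len by (subst last_conv_nth) auto
    also have "ws ! 0 = hd ws" using len by (subst hd_conv_nth) auto
    finally show "finsum_vec TYPE(real) n f I $ a = 0\<^sub>v n $ a" using ends a by simp
  qed
  have step: "x (ws ! Suc r) = x (ws ! r)" if r: "r < m" for r
  proof -
    have "f (g r) = 0\<^sub>v n"
      by (rule indep_zero[OF indep[folded I_def] finI Sprops fS sum0]) (use I r in auto)
    hence d0: "d r = 0\<^sub>v n" using fg r by auto
    show ?thesis
    proof (rule eq_vecI)
      fix a assume "a < dim_vec (x (ws ! r))"
      hence a: "a < n" using xc[of r] r by auto
      have "d r $ a = 0" using d0 a by simp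
      thus "x (ws ! Suc r) $ a = x (ws ! r) $ a" unfolding d_def using xc[of r] xc[of "Suc r"] r a by auto
    qed (use xc[of r] xc[of "Suc r"] r in auto)
  qed
  have all: "x (ws ! r) = x (ws ! 0)" if "r \<le> m" for r
    using that by (induction r) (auto simp: step)
  show ?thesis
  proof
    fix v assume "v \<in> set ws"
    then obtain r where r: "r < length ws" and v: "v = ws ! r" by (auto simp: in_set_conv_nth)
    have "x v = x (ws ! 0)" using all[of r] r unfolding v m_def by auto
    thus "x v = x (hd ws)" using len by (subst hd_conv_nth) auto
  qed
qed



lemma mod_cases_aux:
  fixes r s k :: nat
  assumes "r < k" "s < k" "k \<ge> 3" "r = Suc s mod k" "Suc r mod k = s"
  shows False
proof (cases "Suc s < k")
  case True
  hence r: "r = Suc s" using assms by simp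
  show False
  proof (cases "Suc r < k")
    case True then show False using assms r by simp
  next
    case False then have "Suc r = k" using assms(1) by linarith
    then show False using assms r by simp
  qed
next
  case False
  hence "Suc s = k" using assms by simp
  hence "r = 0" using assms by simp
  hence "Suc r mod k = 1" using assms by simp
  thus False using assms \<open>Suc s = k\<close> by simp
qed

lemma cycle_walk:
  assumes cyc: "is_sym_cycle E vs"
  defines "ws \<equiv> vs @ [hd vs]"
  shows "snd E = path_arcs ws \<and> set ws = fst E \<and> length ws \<ge> 2 \<and>
         inj_on (\<lambda>r. {ws ! r, ws ! Suc r}) {..<length ws - 1} \<and> hd ws = last ws"
proof -
  define k where "k = length vs"
  have dist: "distinct vs" and k3: "k \<ge> 3" and fE: "fst E = set vs" and sE: "snd E = cycle_arcs vs"
    using cyc unfolding is_sym_cycle_def k_def by auto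
  have lw: "length ws = Suc k" unfolding ws_def k_def by simp
  have nth: "ws ! j = vs ! (j mod k)" if "j \<le> k" for j
  proof (cases "j < k")
    case True thus ?thesis unfolding ws_def k_def by (simp add: nth_append)
  next
    case False
    hence "j = k" using that by simp
    thus ?thesis unfolding ws_def k_def using k3 k_def by (cases vs) (auto simp: nth_append)
  qed
  have nth1: "ws ! r = vs ! r" and nth2: "ws ! Suc r = vs ! (Suc r mod k)" if "r < k" for r
    using nth[of r] nth[of "Suc r"] that by auto
  have pa: "path_arcs ws = cycle_arcs vs"
  proof -
    have "{(ws ! r, ws ! Suc r) | r. Suc r < length ws} = {(vs ! r, vs ! (Suc r mod length vs)) | r. r < length vs}"
      using nth1 nth2 lw unfolding k_def by force
    moreover have "{(ws ! Suc r, ws ! r) | r. Suc r < length ws} = {(vs ! (Suc r mod length vs), vs ! r) | r. r < length vs}"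
      using nth1 nth2 lw unfolding k_def by force
    ultimately show ?thesis unfolding path_arcs_def cycle_arcs_def by simp
  qed
  have inj: "inj_on (\<lambda>r. {ws ! r, ws ! Suc r}) {..<length ws - 1}"
  proof (rule inj_onI)
    fix r s assume r: "r \<in> {..<length ws - 1}" and s: "s \<in> {..<length ws - 1}"
      and eq: "{ws ! r, ws ! Suc r} = {ws ! s, ws ! Suc s}"
    from r s lw have rk: "r < k" and sk: "s < k" by auto
    have k0: "0 < k" using k3 by auto
    have i1: "Suc r mod k < k" "Suc s mod k < k" using k0 by auto
    from eq have "(vs ! r = vs ! s \<and> vs ! (Suc r mod k) = vs ! (Suc s mod k)) \<or>
                  (vs ! r = vs ! (Suc s mod k) \<and> vs ! (Suc r mod k) = vs ! s)"
      unfolding nth1[OF rk] nth2[OF rk] nth1[OF sk] nth2[OF sk] by (auto simp: doubleton_eq_iff)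
    hence "r = s \<or> (r = Suc s mod k \<and> Suc r mod k = s)"
      using dist rk sk i1 unfolding k_def by (auto simp: nth_eq_iff_index_eq)
    thus "r = s" using mod_cases_aux[OF rk sk k3] by auto
  qed
  have "set ws = fst E" unfolding ws_def fE using k3 k_def by (cases vs) auto
  moreover have "hd ws = last ws" unfolding ws_def using k3 k_def by (cases vs) auto
  ultimately show ?thesis using pa sE inj lw k3 by auto
qed

lemma path_walk:
  assumes p: "is_sym_path E vs"
  shows "snd E = path_arcs vs \<and> set vs = fst E \<and> length vs \<ge> 2 \<and>
         inj_on (\<lambda>r. {vs ! r, vs ! Suc r}) {..<length vs - 1}"
proof -
  have dist: "distinct vs" using p unfolding is_sym_path_def by auto
  have inj: "inj_on (\<lambda>r. {vs ! r, vs ! Suc r}) {..<length vs - 1}"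
  proof (rule inj_onI)
    fix r s assume r: "r \<in> {..<length vs - 1}" and s: "s \<in> {..<length vs - 1}"
      and eq: "{vs ! r, vs ! Suc r} = {vs ! s, vs ! Suc s}"
    from r s have rk: "Suc r < length vs" and sk: "Suc s < length vs" by auto
    from eq have "(vs ! r = vs ! s \<and> vs ! Suc r = vs ! Suc s) \<or>
                  (vs ! r = vs ! Suc s \<and> vs ! Suc r = vs ! s)"
      by (auto simp: doubleton_eq_iff)
    hence "r = s \<or> (r = Suc s \<and> Suc r = s)"
      using dist rk sk by (auto simp: nth_eq_iff_index_eq)
    thus "r = s" by auto
  qed
  thus ?thesis using p unfolding is_sym_path_def by auto
qed



lemma part1:
  fixes V :: "'v set" and A :: "('v \<times> 'v) set" and C :: "'v \<Rightarrow> 'v \<Rightarrow> real mat"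
  assumes cols: "\<forall>(j, i)\<in>A. dim_col (C j i) = n"
    and Csym: "\<forall>(i, j)\<in>A. C i j = C j i"
    and ear: "sym_ear_decomposition V A D"
    and ind: "\<forall>E\<in>set D. independent_subspaces n (two_cycles (snd E)) (cycle_kernel C)"
  shows "well_configured V A n C"
  unfolding well_configured_def
proof (intro allI impI)
  fix x :: "'v \<Rightarrow> real vec"
  assume xcar: "\<forall>i\<in>V. x i \<in> carrier_vec n"
    and cond: "\<forall>(j, i)\<in>A. C j i *\<^sub>v x i = C j i *\<^sub>v x j"
  have Dne: "D \<noteq> []" and d0: "\<exists>vs. is_sym_cycle (D ! 0) vs"
    and dstep: "\<forall>i < length D. 0 < i \<longrightarrow>
        (let prev = (\<Union>k<i. fst (D ! k)) in
          (\<exists>vs. is_sym_cycle (D ! i) vs \<and> card (fst (D ! i) \<inter> prev) = 1) \<or>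
          (\<exists>vs. is_sym_path (D ! i) vs \<and> fst (D ! i) \<inter> prev = {hd vs, last vs}))"
    and Vu: "(\<Union>E\<in>set D. fst E) = V" and Au: "(\<Union>E\<in>set D. snd E) = A"
    using ear unfolding sym_ear_decomposition_def by auto
  have fV: "fst E \<subseteq> V" if "E \<in> set D" for E using Vu that by auto
  have sA: "snd E \<subseteq> A" if "E \<in> set D" for E using Au that by auto
  have cyc_eq: "\<forall>v\<in>fst E. x v = x (hd vs)" if E: "E \<in> set D" and cy: "is_sym_cycle E vs" for E vs
  proof -
    define ws where "ws = vs @ [hd vs]"
    have W: "snd E = path_arcs ws \<and> set ws = fst E \<and> length ws \<ge> 2 \<and>
         inj_on (\<lambda>r. {ws ! r, ws ! Suc r}) {..<length ws - 1} \<and> hd ws = last ws"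
      using cycle_walk[OF cy] unfolding ws_def .
    have "\<forall>v\<in>set ws. x v = x (hd ws)"
      by (rule walk_lemma[OF _ _ _ cols Csym _ cond]) (use W sA[OF E] fV[OF E] xcar ind E in auto)
    moreover have "hd ws = hd vs" unfolding ws_def using cy unfolding is_sym_cycle_def by (cases vs) auto
    ultimately show ?thesis using W by auto
  qed
  have path_eq: "\<forall>v\<in>fst E. x v = x (hd vs)"
    if E: "E \<in> set D" and p: "is_sym_path E vs" and he: "x (hd vs) = x (last vs)" for E vs
  proof -
    have W: "snd E = path_arcs vs \<and> set vs = fst E \<and> length vs \<ge> 2 \<and>
         inj_on (\<lambda>r. {vs ! r, vs ! Suc r}) {..<length vs - 1}"
      using path_walk[OF p] .
    have "\<forall>v\<in>set vs. x v = x (hd vs)"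
      by (rule walk_lemma[OF _ _ _ cols Csym _ cond he]) (use W sA[OF E] fV[OF E] xcar ind E in auto)
    thus ?thesis using W by auto
  qed
  obtain vs0 where vs0: "is_sym_cycle (D ! 0) vs0" using d0 by auto
  define c where "c = x (hd vs0)"
  have D0: "D ! 0 \<in> set D" using Dne by auto
  have main: "\<forall>v\<in>fst (D ! i). x v = c" if "i < length D" for i
    using that
  proof (induction i rule: less_induct)
    case (less i)
    show ?case
    proof (cases "i = 0")
      case True
      thus ?thesis using cyc_eq[OF D0 vs0] unfolding c_def by simp
    next
      case False
      define prev where "prev = (\<Union>k<i. fst (D ! k))"
      have prevc: "\<forall>v\<in>prev. x v = c" unfolding prev_def using less by auto
      have Ei: "D ! i \<in> set D" using less by auto
      from dstep less False have
        "(\<exists>vs. is_sym_cycle (D ! i) vs \<and> card (fst (D ! i) \<inter> prev) = 1) \<or>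
         (\<exists>vs. is_sym_path (D ! i) vs \<and> fst (D ! i) \<inter> prev = {hd vs, last vs})"
        unfolding prev_def Let_def by auto
      thus ?thesis
      proof
        assume "\<exists>vs. is_sym_cycle (D ! i) vs \<and> card (fst (D ! i) \<inter> prev) = 1"
        then obtain vs where cy: "is_sym_cycle (D ! i) vs" and cd: "card (fst (D ! i) \<inter> prev) = 1" by auto
        from cd obtain w where "fst (D ! i) \<inter> prev = {w}" by (auto simp: card_Suc_eq)
        hence w1: "w \<in> fst (D ! i)" and w2: "w \<in> prev" by auto
        have all: "\<forall>v\<in>fst (D ! i). x v = x (hd vs)" by (rule cyc_eq[OF Ei cy])
        have "x (hd vs) = c" using all w1 prevc w2 by metis
        thus ?thesis using all by auto
      next
        assume "\<exists>vs. is_sym_path (D ! i) vs \<and> fst (D ! i) \<inter> prev = {hd vs, last vs}"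
        then obtain vs where p: "is_sym_path (D ! i) vs" and ii: "fst (D ! i) \<inter> prev = {hd vs, last vs}" by auto
        have "x (hd vs) = c" "x (last vs) = c" using ii prevc by auto
        hence all: "\<forall>v\<in>fst (D ! i). x v = x (hd vs)" using path_eq[OF Ei p] by auto
        thus ?thesis using \<open>x (hd vs) = c\<close> by auto
      qed
    qed
  qed
  have "\<forall>v\<in>V. x v = c"
  proof
    fix v assume "v \<in> V"
    then obtain E where "E \<in> set D" "v \<in> fst E" using Vu by auto
    then obtain i where "i < length D" "D ! i = E" by (auto simp: in_set_conv_nth)
    thus "x v = c" using main \<open>v \<in> fst E\<close> by auto
  qed
  thus "\<forall>i\<in>V. \<forall>j\<in>V. x i = x j" by auto
qed



definition Dm :: "nat \<Rightarrow> nat \<Rightarrow> real mat" where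
  "Dm n k = mat n n (\<lambda>(a, b). if a = b \<and> a \<noteq> k then 1 else 0)"

lemma Dm_mult: assumes v: "v \<in> carrier_vec n" and a: "a < n"
  shows "(Dm n k *\<^sub>v v) $ a = (if a \<noteq> k then v $ a else 0)"
proof -
  have "(Dm n k *\<^sub>v v) $ a = (\<Sum>i\<in>{0..<n}. (if a = i \<and> a \<noteq> k then 1 else 0) * v $ i)"
    using v a unfolding Dm_def by (simp add: scalar_prod_def)
  also have "\<dots> = (\<Sum>i\<in>{0..<n}. if i = a then (if a \<noteq> k then v $ a else 0) else 0)"
    by (rule sum.cong) auto
  also have "\<dots> = (if a \<noteq> k then v $ a else 0)" using a by simp
  finally show ?thesis .
qed

lemma Dm_kernel: "mat_kernel (Dm n k) = {v \<in> carrier_vec n. \<forall>a<n. a \<noteq> k \<longrightarrow> v $ a = 0}"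
proof -
  have dims: "dim_col (Dm n k) = n" "dim_row (Dm n k) = n" unfolding Dm_def by auto
  show ?thesis
  proof (rule Set.set_eqI, rule iffI)
    fix v :: "real vec" assume "v \<in> mat_kernel (Dm n k)"
    hence v: "v \<in> carrier_vec n" and z: "Dm n k *\<^sub>v v = 0\<^sub>v n" unfolding mat_kernel_def dims by auto
    have "v $ a = 0" if "a < n" "a \<noteq> k" for a
      using Dm_mult[OF v that(1), of k] z that by auto
    thus "v \<in> {v \<in> carrier_vec n. \<forall>a<n. a \<noteq> k \<longrightarrow> v $ a = 0}" using v by auto
  next
    fix v :: "real vec" assume "v \<in> {v \<in> carrier_vec n. \<forall>a<n. a \<noteq> k \<longrightarrow> v $ a = 0}"
    hence v: "v \<in> carrier_vec n" and z: "\<forall>a<n. a \<noteq> k \<longrightarrow> v $ a = 0" by auto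
    have "Dm n k *\<^sub>v v = 0\<^sub>v n"
    proof (rule eq_vecI)
      fix a assume "a < dim_vec (0\<^sub>v n :: real vec)"
      hence a: "a < n" by simp
      show "(Dm n k *\<^sub>v v) $ a = 0\<^sub>v n $ a" unfolding Dm_mult[OF v a] using z a by auto
    qed (use dims in auto)
    thus "v \<in> mat_kernel (Dm n k)" unfolding mat_kernel_def dims using v by auto
  qed
qed

lemma Dm_kernel_nonzero: assumes "k < n" shows "mat_kernel (Dm n k) \<noteq> {0\<^sub>v n}"
proof -
  have "(unit_vec n k :: real vec) \<in> mat_kernel (Dm n k)" unfolding Dm_kernel using assms by auto
  moreover have "(unit_vec n k :: real vec) \<noteq> 0\<^sub>v n"
  proof
    assume "(unit_vec n k :: real vec) = 0\<^sub>v n"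
    hence "(unit_vec n k :: real vec) $ k = 0\<^sub>v n $ k" by simp
    thus False using assms by simp
  qed
  ultimately show ?thesis by blast
qed



lemma part2:
  fixes V :: "'v set" and A :: "('v \<times> 'v) set" and n :: nat
    and D :: "('v set \<times> ('v \<times> 'v) set) list"
  assumes ear: "sym_ear_decomposition V A D"
    and mx: "Max (ear_length ` set D) \<le> n"
  shows "\<exists>C' :: 'v \<Rightarrow> 'v \<Rightarrow> real mat.
               (\<forall>(j, i)\<in>A. dim_col (C' j i) = n) \<and>
               (\<forall>(i, j)\<in>A. C' i j = C' j i) \<and>
               (\<forall>(i, j)\<in>A. mat_kernel (C' i j) \<noteq> {0\<^sub>v n}) \<and>
               well_configured V A n C'"
proof -
  have Dne: "D \<noteq> []" and d0: "\<exists>vs. is_sym_cycle (D ! 0) vs"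
    and dstep: "\<forall>i < length D. 0 < i \<longrightarrow>
        (let prev = (\<Union>k<i. fst (D ! k)) in
          (\<exists>vs. is_sym_cycle (D ! i) vs \<and> card (fst (D ! i) \<inter> prev) = 1) \<or>
          (\<exists>vs. is_sym_path (D ! i) vs \<and> fst (D ! i) \<inter> prev = {hd vs, last vs}))"
    and disj: "\<forall>i < length D. \<forall>j < length D. i \<noteq> j \<longrightarrow> snd (D ! i) \<inter> snd (D ! j) = {}"
    and Au: "(\<Union>E\<in>set D. snd E) = A"
    using ear unfolding sym_ear_decomposition_def by auto
  define T where "T E = two_cycles (snd E)" for E :: "'v set \<times> ('v \<times> 'v) set"
  have shape: "\<exists>ws. snd E = path_arcs ws" if E: "E \<in> set D" for E
  proof -
    obtain i where i: "i < length D" and Ei: "E = D ! i" using E by (auto simp: in_set_conv_nth)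
    show ?thesis
    proof (cases "i = 0")
      case True
      then obtain vs where "is_sym_cycle E vs" using d0 Ei by auto
      thus ?thesis using cycle_walk by blast
    next
      case False
      hence "(\<exists>vs. is_sym_cycle E vs) \<or> (\<exists>vs. is_sym_path E vs)"
        using dstep i Ei unfolding Let_def by blast
      thus ?thesis using cycle_walk path_walk by blast
    qed
  qed
  have symE: "(b, a) \<in> snd E" if E: "E \<in> set D" and ab: "(a, b) \<in> snd E" for E a b
  proof -
    obtain ws where "snd E = path_arcs ws" using shape[OF E] by blast
    thus ?thesis using ab unfolding path_arcs_def by auto
  qed
  have finT: "finite (T E)" if E: "E \<in> set D" for E
  proof -
    obtain ws where "snd E = path_arcs ws" using shape[OF E] by blast
    thus ?thesis unfolding T_def by (simp add: two_cycles_path)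
  qed
  have cardT: "card (T E) \<le> n" if "E \<in> set D" for E
  proof -
    have "ear_length E \<le> Max (ear_length ` set D)" using that by (intro Max_ge) auto
    thus ?thesis using mx unfolding ear_length_def T_def by simp
  qed
  have uniq: "E1 = E2" if E1: "E1 \<in> set D" and E2: "E2 \<in> set D" and e1: "e \<in> T E1" and e2: "e \<in> T E2" for E1 E2 e
  proof -
    obtain a b where e: "e = {a, b}" and ab: "(a, b) \<in> snd E1" using e1 unfolding T_def two_cycles_def by auto
    obtain c d where e': "e = {c, d}" and cd: "(c, d) \<in> snd E2" using e2 unfolding T_def two_cycles_def by auto
    have "(a, b) \<in> snd E2" using e e' cd symE[OF E2 cd] by (auto simp: doubleton_eq_iff)
    obtain i where i: "i < length D" and Ei: "E1 = D ! i" using E1 by (auto simp: in_set_conv_nth)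
    obtain j where j: "j < length D" and Ej: "E2 = D ! j" using E2 by (auto simp: in_set_conv_nth)
    show ?thesis
    proof (rule ccontr)
      assume "E1 \<noteq> E2"
      hence "i \<noteq> j" using Ei Ej by auto
      thus False using disj i j Ei Ej ab \<open>(a, b) \<in> snd E2\<close> by blast
    qed
  qed
  have exh: "\<exists>h. inj_on h (T E) \<and> h ` T E \<subseteq> {..<n}" if E: "E \<in> set D" for E
  proof -
    obtain h where "bij_betw h (T E) {0..<card (T E)}" using ex_bij_betw_finite_nat[OF finT[OF E]] by auto
    hence "inj_on h (T E) \<and> h ` T E \<subseteq> {..<n}" using cardT[OF E] unfolding bij_betw_def by auto
    thus ?thesis by blast
  qed
  define hE where "hE E = (SOME h. inj_on h (T E) \<and> h ` T E \<subseteq> {..<n})" for E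
  define eo where "eo e = (SOME E. E \<in> set D \<and> e \<in> T E)" for e
  define idx where "idx e = hE (eo e) e" for e
  have hEp: "inj_on (hE E) (T E) \<and> hE E ` T E \<subseteq> {..<n}" if "E \<in> set D" for E
    unfolding hE_def by (rule someI_ex[OF exh[OF that]])
  have eoE: "eo e = E" if "E \<in> set D" "e \<in> T E" for E e
  proof -
    have "eo e \<in> set D \<and> e \<in> T (eo e)" unfolding eo_def by (rule someI[of _ E]) (use that in auto)
    thus ?thesis using uniq that by blast
  qed
  have idx_inj: "inj_on idx (T E)" if "E \<in> set D" for E
  proof -
    have "inj_on (hE E) (T E)" using hEp[OF that] by auto
    moreover have "\<forall>e\<in>T E. idx e = hE E e" unfolding idx_def using eoE[OF that] by auto
    ultimately show ?thesis using inj_on_cong[of "T E" idx "hE E"] by simp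
  qed
  have idx_lt: "idx e < n" if "E \<in> set D" "e \<in> T E" for E e
    using hEp[OF that(1)] eoE[OF that] that(2) unfolding idx_def by auto
  define C' where "C' i j = Dm n (idx {i, j})" for i j
  have cols': "\<forall>(j, i)\<in>A. dim_col (C' j i) = n" unfolding C'_def Dm_def by auto
  have Csym': "\<forall>(i, j)\<in>A. C' i j = C' j i" unfolding C'_def by (auto simp: insert_commute)
  have arcT: "\<exists>E\<in>set D. {i, j} \<in> T E" if ij: "(i, j) \<in> A" for i j
  proof -
    obtain E where "E \<in> set D" "(i, j) \<in> snd E" using Au ij by auto
    thus ?thesis unfolding T_def two_cycles_def by blast
  qed
  have nz: "\<forall>(i, j)\<in>A. mat_kernel (C' i j) \<noteq> {0\<^sub>v n}"
  proof (clarify)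
    fix i j assume ij: "(i, j) \<in> A" and eq: "mat_kernel (C' i j) = {0\<^sub>v n}"
    obtain E where "E \<in> set D" "{i, j} \<in> T E" using arcT[OF ij] by auto
    hence "idx {i, j} < n" by (rule idx_lt)
    thus False using Dm_kernel_nonzero eq unfolding C'_def by blast
  qed
  have ck: "cycle_kernel C' e = mat_kernel (Dm n (idx e))" if E: "E \<in> set D" and e: "e \<in> T E" for E e
  proof -
    obtain a b where eab: "e = {a, b}" and ab: "(a, b) \<in> snd E" using e unfolding T_def two_cycles_def by auto
    have "(a, b) \<in> A" using Au ab E by auto
    from kern_eq[OF this Csym'] show ?thesis unfolding eab C'_def by simp
  qed
  have ind': "\<forall>E\<in>set D. independent_subspaces n (two_cycles (snd E)) (cycle_kernel C')"
  proof (intro ballI)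
    fix E assume E: "E \<in> set D"
    show "independent_subspaces n (two_cycles (snd E)) (cycle_kernel C')"
      unfolding independent_subspaces_def T_def[symmetric]
    proof (intro ballI)
      fix e assume e: "e \<in> T E"
      let ?I = "T E - {e}"
      have finI: "finite ?I" using finT[OF E] by auto
      show "cycle_kernel C' e \<inter> subspace_sum n ?I (cycle_kernel C') = {0\<^sub>v n}"
      proof (rule Set.set_eqI, rule iffI)
        fix v :: "real vec" assume v: "v \<in> cycle_kernel C' e \<inter> subspace_sum n ?I (cycle_kernel C')"
        hence vk: "v \<in> carrier_vec n" "\<forall>a<n. a \<noteq> idx e \<longrightarrow> v $ a = 0"
          using ck[OF E e] Dm_kernel by auto
        from v obtain f where vf: "v = finsum_vec TYPE(real) n f ?I"
          and fS: "\<forall>j\<in>?I. f j \<in> cycle_kernel C' j" unfolding subspace_sum_def by auto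
        have fK: "f j \<in> carrier_vec n \<and> (\<forall>a<n. a \<noteq> idx j \<longrightarrow> f j $ a = 0)" if "j \<in> ?I" for j
          using fS that ck[OF E, of j] Dm_kernel by auto
        have fc: "f \<in> ?I \<rightarrow> carrier_vec n" using fK by auto
        have "v = 0\<^sub>v n"
        proof (rule eq_vecI)
          fix a assume "a < dim_vec (0\<^sub>v n :: real vec)"
          hence a: "a < n" by simp
          show "v $ a = 0\<^sub>v n $ a"
          proof (cases "a = idx e")
            case False thus ?thesis using vk a by auto
          next
            case True
            have "v $ a = (\<Sum>j\<in>?I. f j $ a)" unfolding vf by (rule index_finsum_vec[OF finI a fc])
            also have "\<dots> = 0"
            proof (rule sum.neutral, rule ballI)
              fix j assume j: "j \<in> ?I"
              have "idx j \<noteq> idx e" using idx_inj[OF E] j e by (auto dest: inj_onD)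
              thus "f j $ a = 0" using fK[OF j] a True by auto
            qed
            finally show ?thesis using a by simp
          qed
        qed (use vk in auto)
        thus "v \<in> {0\<^sub>v n}" by simp
      next
        fix v :: "real vec" assume "v \<in> {0\<^sub>v n}"
        hence v: "v = 0\<^sub>v n" by simp
        have "v \<in> cycle_kernel C' e" unfolding v ck[OF E e] Dm_kernel by auto
        moreover have "v \<in> subspace_sum n ?I (cycle_kernel C')"
        proof -
          have zc: "(\<lambda>_. 0\<^sub>v n :: real vec) \<in> ?I \<rightarrow> carrier_vec n" by auto
          have "finsum_vec TYPE(real) n (\<lambda>_. 0\<^sub>v n) ?I = 0\<^sub>v n"
          proof (rule eq_vecI)
            show "dim_vec (finsum_vec TYPE(real) n (\<lambda>_. 0\<^sub>v n) ?I) = dim_vec (0\<^sub>v n :: real vec)"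
              using finsum_vec_closed[OF zc] by auto
            fix a assume "a < dim_vec (0\<^sub>v n :: real vec)"
            hence a: "a < n" by simp
            show "finsum_vec TYPE(real) n (\<lambda>_. 0\<^sub>v n) ?I $ a = 0\<^sub>v n $ a"
              using index_finsum_vec[OF finI a zc] a by simp
          qed
          moreover have "\<forall>j\<in>?I. (0\<^sub>v n :: real vec) \<in> cycle_kernel C' j"
            using ck[OF E] Dm_kernel by auto
          ultimately have "\<exists>f. 0\<^sub>v n = finsum_vec TYPE(real) n f ?I \<and> (\<forall>j\<in>?I. f j \<in> cycle_kernel C' j)"
            by (intro exI[of _ "\<lambda>_. 0\<^sub>v n"]) simp
          thus ?thesis unfolding subspace_sum_def v by simp
        qed
        ultimately show "v \<in> cycle_kernel C' e \<inter> subspace_sum n ?I (cycle_kernel C')" by simp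
      qed
    qed
  qed
  have "well_configured V A n C'" by (rule part1[OF cols' Csym' ear ind'])
  thus ?thesis using cols' Csym' nz by blast
qed


theorem theorem3:
  fixes V :: "'v set" and A :: "('v \<times> 'v) set" and n :: nat
    and C :: "'v \<Rightarrow> 'v \<Rightarrow> real mat"
    and D :: "('v set \<times> ('v \<times> 'v) set) list"
  assumes graph: "sym_digraph V A"
    and noself: "no_self_arcs A"
    and m2: "card V \<ge> 2"
    and conn: "k_connected 2 V A"
    and cols: "\<forall>(j, i)\<in>A. dim_col (C j i) = n"
    and Csym: "\<forall>(i, j)\<in>A. C i j = C j i"
    and ear: "sym_ear_decomposition V A D"
  shows "((\<forall>E\<in>set D. independent_subspaces n (two_cycles (snd E)) (cycle_kernel C))
            \<longrightarrow> well_configured V A n C)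
       \<and> (Max (ear_length ` set D) \<le> n \<longrightarrow>
            (\<exists>C' :: 'v \<Rightarrow> 'v \<Rightarrow> real mat.
               (\<forall>(j, i)\<in>A. dim_col (C' j i) = n) \<and>
               (\<forall>(i, j)\<in>A. C' i j = C' j i) \<and>
               (\<forall>(i, j)\<in>A. mat_kernel (C' i j) \<noteq> {0\<^sub>v n}) \<and>
               well_configured V A n C'))"
proof (intro conjI impI)
  assume "\<forall>E\<in>set D. independent_subspaces n (two_cycles (snd E)) (cycle_kernel C)"
  thus "well_configured V A n C" by (rule part1[OF cols Csym ear])
next
  assume "Max (ear_length ` set D) \<le> n"
  thus "\<exists>C' :: 'v \<Rightarrow> 'v \<Rightarrow> real mat.
               (\<forall>(j, i)\<in>A. dim_col (C' j i) = n) \<and>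
               (\<forall>(i, j)\<in>A. C' i j = C' j i) \<and>
               (\<forall>(i, j)\<in>A. mat_kernel (C' i j) \<noteq> {0\<^sub>v n}) \<and>
               well_configured V A n C'" by (rule part2[OF ear])
qed

end
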